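(* Let $X$ be a compact metric space and $Y\subseteq X$ a nonempty subset, endowed with the induced metric. Then $d^{us}_{GH}(X,Y)=d_{GH}(X,Y)$.
   Context: For a metric space, $|xy|$ denotes distance. A set-valued map $f:X\rightrightarrows Y$ assigns to each $x\in X$ a nonempty $f(x)\subseteq Y$ and is identified with its graph. A correspondence between $X$ and $Y$ is a subset $R\subseteq X\times Y$ whose projections to $X$ and to $Y$ are both surjective, regarded as the set-valued map $x\mapsto R(x)=\{y:(x,y)\in R\}$; $R^{-1}=\{(y,x):(x,y)\in R\}$; $\mathcal R(X,Y)$ is the set of all correspondences. The distortion of a nonempty $\sigma\subseteq X\times Y$ is $\operatorname{dis}\sigma=\sup\{||xx'|-|yy'||:(x,y),(x',y')\in\sigma\}\in[0,\infty]$, and $d_{GH}(X,Y)=\frac12\inf\{\operatorname{dis}R:R\in\mathcal R(X,Y)\}$. A set-valued map $f$ is upper semicontinuous if for every $x$ and every open $U\supseteq f(x)$ there is a neighborhood $V$ of $x$ with $f(x')\subseteq U$ for all $x'\in V$. $\mathcal R_{us}(X,Y)$ is the set of $R\in\mathcal R(X,Y)$ with both $R$ and $R^{-1}$ upper semicontinuous, and $d^{us}_{GH}(X,Y)=\frac12\inf\{\operatorname{dis}R:R\in\mathcal R_{us}(X,Y)\}$. *)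

theory Defs
  imports "HOL-Analysis.Analysis"
begin

text \<open>Metric spaces are modelled as subsets X of a metric_space type with the induced metric.\<close>

definition distortion :: "('a::metric_space \<times> 'b::metric_space) set \<Rightarrow> ereal" where
  "distortion \<sigma> = Sup {ereal \<bar>dist x x' - dist y y'\<bar> | x y x' y'. (x, y) \<in> \<sigma> \<and> (x', y') \<in> \<sigma>}"

definition correspondences :: "'a set \<Rightarrow> 'b set \<Rightarrow> ('a \<times> 'b) set set" where
  "correspondences X Y = {R. R \<subseteq> X \<times> Y \<and> fst ` R = X \<and> snd ` R = Y}"

definition usc_on :: "'a::metric_space set \<Rightarrow> 'b::metric_space set \<Rightarrow> ('a \<times> 'b) set \<Rightarrow> bool" where
  "usc_on X Y R \<longleftrightarrow> (\<forall>x\<in>X. \<forall>U. openin (top_of_set Y) U \<and> R `` {x} \<subseteq> U \<longrightarrow>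
      (\<exists>V. openin (top_of_set X) V \<and> x \<in> V \<and> (\<forall>x'\<in>V. R `` {x'} \<subseteq> U)))"

definition us_correspondences :: "'a::metric_space set \<Rightarrow> 'b::metric_space set \<Rightarrow> ('a \<times> 'b) set set" where
  "us_correspondences X Y = {R \<in> correspondences X Y. usc_on X Y R \<and> usc_on Y X (converse R)}"

definition GH_dist :: "'a::metric_space set \<Rightarrow> 'b::metric_space set \<Rightarrow> ereal" where
  "GH_dist X Y = Inf (distortion ` correspondences X Y) / 2"

definition GH_dist_us :: "'a::metric_space set \<Rightarrow> 'b::metric_space set \<Rightarrow> ereal" where
  "GH_dist_us X Y = Inf (distortion ` us_correspondences X Y) / 2"

end

theory Submission
  imports Defs
begin

lemma net_in_subset:
  fixes X Y :: "'a::metric_space set"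
  assumes "compact X" "Y \<subseteq> X" "d > 0"
  shows "\<exists>N. finite N \<and> N \<subseteq> Y \<and> Y \<subseteq> (\<Union>x\<in>N. ball x d)"
proof -
  obtain k where k: "finite k" "X \<subseteq> (\<Union>x\<in>k. ball x (d/2))"
    using assms(1,3) unfolding compact_eq_totally_bounded by (meson half_gt_zero)
  define K where "K = {c\<in>k. \<exists>y\<in>Y. dist c y < d/2}"
  define f where "f = (\<lambda>c. SOME y. y\<in>Y \<and> dist c y < d/2)"
  have fK: "f c \<in> Y \<and> dist c (f c) < d/2" if "c \<in> K" for c
    using that unfolding K_def f_def by (metis (mono_tags, lifting) mem_Collect_eq someI_ex)
  show ?thesis
  proof (intro exI conjI)
    show "finite (f ` K)" using k(1) by (simp add: K_def)
    show "f ` K \<subseteq> Y" using fK by auto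
    show "Y \<subseteq> (\<Union>x\<in>f ` K. ball x d)"
    proof
      fix y assume y: "y \<in> Y"
      then obtain c where c: "c \<in> k" "dist c y < d/2" using k(2) assms(2) by auto
      then have cK: "c \<in> K" using y K_def by auto
      have "dist (f c) y \<le> dist (f c) c + dist c y" by (rule dist_triangle)
      then have "dist (f c) y < d" using fK[OF cK] c(2) by (simp add: dist_commute)
      then show "y \<in> (\<Union>x\<in>f ` K. ball x d)" using cK by auto
    qed
  qed
qed

lemma usc_fin:
  fixes S :: "('a::metric_space \<times> 'b::metric_space) set"
  assumes "finite S"
  shows "usc_on A B {(x,y). x\<in>A \<and> y\<in>B \<and> (\<exists>(p,q)\<in>S. dist x p \<le> e \<and> dist y q \<le> e)}"
    (is "usc_on A B ?T")
  unfolding usc_on_def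
proof (intro ballI allI impI, elim conjE)
  fix x U assume x: "x \<in> A" and U: "?T `` {x} \<subseteq> U"
  define V where "V = A \<inter> (\<Inter>s\<in>{s\<in>S. e < dist x (fst s)}. {x'. e < dist x' (fst s)})"
  have o: "open {x'. e < dist x' p}" for p :: 'a
  proof -
    have "{x'. e < dist x' p} = - cball p e" by (auto simp: dist_commute)
    then show ?thesis by (simp add: open_Compl)
  qed
  have "openin (top_of_set A) V" unfolding V_def
    by (intro openin_open_Int open_INT) (use assms o in auto)
  moreover have "x \<in> V" using x by (auto simp: V_def)
  moreover have "\<forall>x'\<in>V. ?T `` {x'} \<subseteq> U"
  proof (intro ballI subsetI)
    fix x' y assume x': "x' \<in> V" and y: "y \<in> ?T `` {x'}"
    then obtain p q where pq: "(p,q) \<in> S" "dist x' p \<le> e" "dist y q \<le> e" "y \<in> B" by auto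
    have "dist x p \<le> e"
    proof (rule ccontr)
      assume "\<not> dist x p \<le> e"
      then have "e < dist x' p" using x' pq(1) by (force simp: V_def)
      then show False using pq(2) by simp
    qed
    then have "y \<in> ?T `` {x}" using pq x by auto
    then show "y \<in> U" using U by auto
  qed
  ultimately show "\<exists>V. openin (top_of_set A) V \<and> x \<in> V \<and> (\<forall>x'\<in>V. ?T `` {x'} \<subseteq> U)"
    by blast
qed

lemma dist_est:
  fixes x x' p p' :: "'a::metric_space" and y y' q q' :: "'b::metric_space"
  assumes "dist x p \<le> e" "dist x' p' \<le> e" "dist y q \<le> e" "dist y' q' \<le> e"
  shows "\<bar>dist x x' - dist y y'\<bar> \<le> \<bar>dist p p' - dist q q'\<bar> + 4 * e"
proof -
  have "dist x x' \<le> dist x p + dist p p' + dist p' x'" by (metis dist_triangle add_right_mono order_trans dist_triangle2 dist_commute add.assoc)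
  moreover have "dist p p' \<le> dist p x + dist x x' + dist x' p'" by (metis dist_triangle add_right_mono order_trans dist_triangle2 dist_commute add.assoc)
  moreover have "dist y y' \<le> dist y q + dist q q' + dist q' y'" by (metis dist_triangle add_right_mono order_trans dist_triangle2 dist_commute add.assoc)
  moreover have "dist q q' \<le> dist q y + dist y y' + dist y' q'" by (metis dist_triangle add_right_mono order_trans dist_triangle2 dist_commute add.assoc)
  ultimately show ?thesis using assms by (simp add: dist_commute abs_le_iff) linarith
qed

theorem mainTheorem6:
  fixes X Y :: "'a::metric_space set"
  assumes "compact X" and "Y \<subseteq> X" and "Y \<noteq> {}"
  shows "GH_dist_us X Y = GH_dist X Y"
proof -
  have 1: "Inf (distortion ` correspondences X Y) \<le> Inf (distortion ` us_correspondences X Y)"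
    by (rule Inf_superset_mono) (auto simp: us_correspondences_def)
  have 2: "Inf (distortion ` us_correspondences X Y) \<le> distortion R"
    if R: "R \<in> correspondences X Y" for R
  proof (rule ereal_le_epsilon2)
    fix e :: real assume e: "0 < e"
    define d where "d = e / 4"
    have d: "d > 0" using e by (simp add: d_def)
    obtain N1 where N1: "finite N1" "N1 \<subseteq> X" "X \<subseteq> (\<Union>x\<in>N1. ball x d)"
      using net_in_subset[OF assms(1) order_refl d] by blast
    obtain N2 where N2: "finite N2" "N2 \<subseteq> Y" "Y \<subseteq> (\<Union>x\<in>N2. ball x d)"
      using net_in_subset[OF assms(1,2) d] by blast
    have RXY: "R \<subseteq> X \<times> Y" "fst ` R = X" "snd ` R = Y" using R by (auto simp: correspondences_def)
    define S where "S = (\<lambda>x. (x, SOME q. (x,q)\<in>R)) ` N1 \<union> (\<lambda>y. (SOME p. (p,y)\<in>R, y)) ` N2"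
    have SR: "S \<subseteq> R"
    proof
      fix s assume "s \<in> S"
      then consider x where "x \<in> N1" "s = (x, SOME q. (x,q)\<in>R)"
        | y where "y \<in> N2" "s = (SOME p. (p,y)\<in>R, y)" unfolding S_def by blast
      then show "s \<in> R"
      proof cases
        case 1
        then have "\<exists>q. (x,q) \<in> R" using N1(2) RXY(2) by force
        then show ?thesis using 1 by (metis someI_ex)
      next
        case 2
        then have "\<exists>p. (p,y) \<in> R" using N2(2) RXY(3) by force
        then show ?thesis using 2 by (metis someI_ex)
      qed
    qed
    have Sfin: "finite S" using N1(1) N2(1) by (simp add: S_def)
    define R' where "R' = {(x,y). x\<in>X \<and> y\<in>Y \<and> (\<exists>(p,q)\<in>S. dist x p \<le> d \<and> dist y q \<le> d)}"
    have corr: "R' \<in> correspondences X Y"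
      unfolding correspondences_def
    proof (intro CollectI conjI)
      show "R' \<subseteq> X \<times> Y" by (auto simp: R'_def)
      show "fst ` R' = X"
      proof
        show "fst ` R' \<subseteq> X" by (auto simp: R'_def)
        show "X \<subseteq> fst ` R'"
        proof
          fix x assume x: "x \<in> X"
          then obtain n where n: "n \<in> N1" "dist n x < d" using N1(3) by auto
          define q where "q = (SOME q. (n,q)\<in>R)"
          have "(n,q) \<in> S" using n by (auto simp: S_def q_def)
          then have "(n,q) \<in> R" "q \<in> Y" using SR RXY(1) by auto
          then have "(x,q) \<in> R'" using x n \<open>(n,q) \<in> S\<close> d
            by (auto simp: R'_def dist_commute intro!: bexI[of _ "(n,q)"])
          then show "x \<in> fst ` R'" by force
        qed
      qed
      show "snd ` R' = Y"
      proof
        show "snd ` R' \<subseteq> Y" by (auto simp: R'_def)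
        show "Y \<subseteq> snd ` R'"
        proof
          fix y assume y: "y \<in> Y"
          then obtain n where n: "n \<in> N2" "dist n y < d" using N2(3) by auto
          define p where "p = (SOME p. (p,n)\<in>R)"
          have "(p,n) \<in> S" using n by (auto simp: S_def p_def)
          then have "(p,n) \<in> R" "p \<in> X" using SR RXY(1) by auto
          then have "(p,y) \<in> R'" using y n \<open>(p,n) \<in> S\<close> d
            by (auto simp: R'_def dist_commute intro!: bexI[of _ "(p,n)"])
          then show "y \<in> snd ` R'" by force
        qed
      qed
    qed
    have u1: "usc_on X Y R'" unfolding R'_def by (rule usc_fin[OF Sfin])
    have conv: "converse R' = {(y,x). y\<in>Y \<and> x\<in>X \<and> (\<exists>(q,p)\<in>prod.swap ` S. dist y q \<le> d \<and> dist x p \<le> d)}"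
      by (auto simp: R'_def)
    have u2: "usc_on Y X (converse R')" unfolding conv
      by (rule usc_fin) (use Sfin in simp)
    have us: "R' \<in> us_correspondences X Y" using corr u1 u2 by (simp add: us_correspondences_def)
    have "distortion R' \<le> distortion R + ereal e"
      unfolding distortion_def[of R']
    proof (rule Sup_least, clarify)
      fix x y x' y' assume a: "(x,y) \<in> R'" "(x',y') \<in> R'"
      then obtain p q p' q' where pq: "(p,q) \<in> S" "dist x p \<le> d" "dist y q \<le> d"
        "(p',q') \<in> S" "dist x' p' \<le> d" "dist y' q' \<le> d" by (auto simp: R'_def)
      have "ereal \<bar>dist p p' - dist q q'\<bar> \<le> distortion R"
        unfolding distortion_def using pq(1,4) SR by (intro Sup_upper) blast
      moreover have "\<bar>dist x x' - dist y y'\<bar> \<le> \<bar>dist p p' - dist q q'\<bar> + e"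
        using dist_est[OF pq(2,5,3,6)] by (simp add: d_def)
      ultimately show "ereal \<bar>dist x x' - dist y y'\<bar> \<le> distortion R + ereal e"
        by (metis add_right_mono ereal_less_eq(3) order_trans plus_ereal.simps(1))
    qed
    then show "Inf (distortion ` us_correspondences X Y) \<le> distortion R + ereal e"
      using us by (meson INF_lower order_trans)
  qed
  have "Inf (distortion ` us_correspondences X Y) \<le> Inf (distortion ` correspondences X Y)"
    using 2 by (auto intro: Inf_greatest)
  with 1 show ?thesis unfolding GH_dist_us_def GH_dist_def by simp
qed

end
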